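(* Let $\mathcal S,\mathcal R,\mathcal U\subset\mathbb Z^2$ be finite nonempty shapes. Suppose $X\subseteq\mathbb Z^2$ is an infinite $\mathcal S$-DDC with $m$ dots. Then there exists $t\in\mathbb Z^2$ such that the copy $\mathcal U+t$ contains at least $$\frac{m}{|\mathcal S|\cdot|\mathcal R|}\,\Delta(\mathcal S,\mathcal R)\,\Delta(\mathcal R,\mathcal U)$$ points of $X$.
   Context: Work in the square grid $\mathbb Z^2$. A shape is a finite nonempty subset of $\mathbb Z^2$. Copies of a shape $\mathcal S$ are its translates $\mathcal S+t$, $t\in\mathbb Z^2$. $|\mathcal S|$ is the number of grid points of $\mathcal S$. $\Delta(\mathcal S,\mathcal R)=\max_{t\in\mathbb Z^2}|\mathcal S\cap(\mathcal R+t)|$ is the largest intersection of $\mathcal S$ with a copy of $\mathcal R$. A finite set $Y$ of grid points ("dots") is a distinct difference configuration (DDC) if the vectors $y-y'$, over ordered pairs $(y,y')$ of distinct points of $Y$, are pairwise distinct. Equivalently, all lines joining pairs of dots differ in length or slope. A set $X\subseteq\mathbb Z^2$ is an infinite $\mathcal S$-DDC with $m$ dots if for every $t\in\mathbb Z^2$ the set $X\cap(\mathcal S+t)$ has exactly $m$ elements and is a DDC. *)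

theory Defs
  imports Complex_Main
begin

type_synonym point = "int \<times> int"

definition tr :: "point set \<Rightarrow> point \<Rightarrow> point set" where
  "tr S t = (\<lambda>s. (fst s + fst t, snd s + snd t)) ` S"

definition shape :: "point set \<Rightarrow> bool" where
  "shape S \<longleftrightarrow> finite S \<and> S \<noteq> {}"

definition Delta :: "point set \<Rightarrow> point set \<Rightarrow> nat" where
  "Delta S R = Max (range (\<lambda>t. card (S \<inter> tr R t)))"

definition diff :: "point \<Rightarrow> point \<Rightarrow> point" where
  "diff y y' = (fst y - fst y', snd y - snd y')"

definition is_DDC :: "point set \<Rightarrow> bool" where
  "is_DDC Y \<longleftrightarrow> finite Y \<and>
     (\<forall>a\<in>Y. \<forall>b\<in>Y. \<forall>c\<in>Y. \<forall>d\<in>Y. a \<noteq> b \<longrightarrow> c \<noteq> d \<longrightarrow>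
        diff a b = diff c d \<longrightarrow> a = c \<and> b = d)"

definition infinite_DDC :: "point set \<Rightarrow> nat \<Rightarrow> point set \<Rightarrow> bool" where
  "infinite_DDC S m X \<longleftrightarrow>
     (\<forall>t. card (X \<inter> tr S t) = m \<and> is_DDC (X \<inter> tr S t))"

end

theory Submission
  imports Defs
begin

definition padd :: "point \<Rightarrow> point \<Rightarrow> point" where
  "padd a b = (fst a + fst b, snd a + snd b)"

lemma card_tr_X:
  assumes "finite A"
  shows "card (X \<inter> tr A t) = card {a\<in>A. padd a t \<in> X}"
proof -
  have inj: "inj (\<lambda>s::point. padd s t)"
    by (auto simp: inj_def padd_def prod_eq_iff)
  have "X \<inter> tr A t = (\<lambda>s. padd s t) ` {a\<in>A. padd a t \<in> X}"
    by (auto simp: tr_def padd_def)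
  thus ?thesis using card_image[OF inj_on_subset[OF inj]] by auto
qed

lemma card_tr: "card (tr A t) = card A"
proof -
  have inj: "inj (\<lambda>s::point. (fst s + fst t, snd s + snd t))"
    by (auto simp: inj_def prod_eq_iff)
  show ?thesis unfolding tr_def using card_image[OF inj_on_subset[OF inj]] by auto
qed

lemma Delta_le:
  assumes "finite R"
  shows "Delta S R \<le> card R"
proof -
  have le: "\<And>t. card (S \<inter> tr R t) \<le> card R"
    using card_mono[of "tr R t" "S \<inter> tr R t" for t] assms card_tr
    by (metis finite_imageI inf_le2 tr_def)
  have fin: "finite (range (\<lambda>t. card (S \<inter> tr R t)))"
    by (rule finite_subset[of _ "{0..card R}"]) (use le in auto)
  have "Delta S R \<in> range (\<lambda>t. card (S \<inter> tr R t))"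
    unfolding Delta_def by (rule Max_in[OF fin]) auto
  thus ?thesis using le by auto
qed

theorem mainTheorem8:
  fixes S R U X :: "(int \<times> int) set" and m :: nat
  assumes "shape S" and "shape R" and "shape U"
    and "infinite_DDC S m X"
  shows "\<exists>t. real (card (X \<inter> tr U t)) \<ge>
           real m / (real (card S) * real (card R)) * real (Delta S R) * real (Delta R U)"
proof -
  have fS: "finite S" "S \<noteq> {}" and fR: "finite R" "R \<noteq> {}" and fU: "finite U" "U \<noteq> {}"
    using assms(1-3) by (auto simp: shape_def)
  define c where "c s = card {u\<in>U. padd u s \<in> X}" for s
  have c_eq: "card (X \<inter> tr U s) = c s" for s using card_tr_X[OF fU(1)] c_def by simp
  have m_eq: "card {s\<in>S. padd s u \<in> X} = m" for u
    using assms(4) card_tr_X[OF fS(1), of X u] unfolding infinite_DDC_def by metis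
  have comm: "padd a b = padd b a" for a b by (simp add: padd_def add.commute)
  have "(\<Sum>s\<in>S. c s) = card (Sigma S (\<lambda>s. {u\<in>U. padd u s \<in> X}))"
    using fS fU unfolding c_def by (subst card_SigmaI) auto
  also have "Sigma S (\<lambda>s. {u\<in>U. padd u s \<in> X}) = prod.swap ` Sigma U (\<lambda>u. {s\<in>S. padd s u \<in> X})"
    by (force simp: padd_def add.commute)
  also have "card \<dots> = card (Sigma U (\<lambda>u. {s\<in>S. padd s u \<in> X}))"
    by (rule card_image) simp
  also have "\<dots> = (\<Sum>u\<in>U. m)"
    using fS fU by (subst card_SigmaI) (auto simp: m_eq)
  finally have sumN: "(\<Sum>s\<in>S. c s) = m * card U" by simp
  have sumeq: "(\<Sum>s\<in>S. real (c s)) = real m * real (card U)"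
    unfolding of_nat_sum[symmetric] sumN by simp
  have "\<exists>s\<in>S. real (c s) \<ge> real m * real (card U) / real (card S)"
  proof (rule ccontr)
    assume "\<not> ?thesis"
    hence "\<And>s. s \<in> S \<Longrightarrow> real (c s) < real m * real (card U) / real (card S)" by (simp add: not_le)
    hence "(\<Sum>s\<in>S. real (c s)) < (\<Sum>s\<in>S. real m * real (card U) / real (card S))"
      by (rule sum_strict_mono[OF fS(1) fS(2)])
    also have "\<dots> = real m * real (card U)" using fS by (simp add: card_gt_0_iff)
    finally show False using sumeq by simp
  qed
  then obtain s where s: "real (c s) \<ge> real m * real (card U) / real (card S)" by blast
  have cR: "real (card R) > 0" "real (card S) > 0" using fR fS by (auto simp: card_gt_0_iff)
  have d1: "real (Delta S R) \<le> real (card R)" using Delta_le[OF fR(1)] by simp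
  have d2: "real (Delta R U) \<le> real (card U)" using Delta_le[OF fU(1)] by simp
  have "real m / (real (card S) * real (card R)) * real (Delta S R) * real (Delta R U)
      \<le> real m / (real (card S) * real (card R)) * real (card R) * real (card U)"
    by (intro mult_mono d1 d2) (use cR in auto)
  also have "\<dots> = real m * real (card U) / real (card S)" using cR by (simp add: field_simps)
  finally show ?thesis using s c_eq by (metis order_trans)
qed

end
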